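(* Let $0<q<1$, $n\in\mathbb{N}_0$, and let $x,y,r,f,g,v,w,u$ be complex parameters with $y\neq0$. Then \begin{align*} &\sum_{k=0}^{n}\frac{(q^{-n},x;q)_k\,q^k}{(q,y;q)_k}\;{}_3\Phi_2\left[\begin{matrix}r,f,g;\\ v,w;\end{matrix}\;q;\,uq^k\right]\\ &\qquad=\frac{x^n\left(\frac{y}{x};q\right)_n}{(y;q)_n}\sum_{k,j\geqq0}\frac{(r,f,g;q)_{k+j}}{(q;q)_j\,(v,w;q)_{k+j}}\,\frac{\left(\frac{q^{1-n}}{y},\frac{qx}{y};q\right)_k}{\left(\frac{xq^{1-n}}{y},q;q\right)_k}\,u^{k+j}\left(\frac{q}{y}\right)^j. \end{align*}
   Context: Throughout $0<q<1$. For complex $\alpha$: $(\alpha;q)_0=1$, $(\alpha;q)_n=\prod_{k=0}^{n-1}(1-\alpha q^k)$, and $(\alpha_1,\dots,\alpha_m;q)_n=(\alpha_1;q)_n\cdots(\alpha_m;q)_n$. The basic hypergeometric series is ${}_{3}\Phi_{2}\left[\begin{matrix}a_1,a_2,a_3;\\ b_1,b_2;\end{matrix}\,q;z\right]=\sum_{n=0}^\infty\frac{(a_1,a_2,a_3;q)_n}{(b_1,b_2;q)_n}\frac{z^n}{(q;q)_n}$. *)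

theory Defs
  imports "HOL-Analysis.Analysis"
begin

definition qpoch :: "complex \<Rightarrow> complex \<Rightarrow> nat \<Rightarrow> complex" where
  "qpoch a q n = (\<Prod>k<n. 1 - a * q ^ k)"

definition phi32 :: "complex \<Rightarrow> complex \<Rightarrow> complex \<Rightarrow> complex \<Rightarrow> complex \<Rightarrow> complex \<Rightarrow> complex \<Rightarrow> complex" where
  "phi32 a1 a2 a3 b1 b2 q z =
     (\<Sum>n. qpoch a1 q n * qpoch a2 q n * qpoch a3 q n / (qpoch b1 q n * qpoch b2 q n)
           * z ^ n / qpoch q q n)"

end

theory Submission imports Defs begin
unbundle no vec_syntax
notation fps_nth (infixl \<open>$\<close> 75)

lemma qp_0[simp]: "qpoch a Q 0 = 1" by (simp add: qpoch_def)
lemma qp_Suc: "qpoch a Q (Suc m) = qpoch a Q m * (1 - a * Q ^ m)"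
  by (simp add: qpoch_def)
lemma qp_add: "qpoch a Q (m + k) = qpoch a Q m * qpoch (a * Q ^ m) Q k"
  by (induction k) (simp_all add: qp_Suc power_add mult.assoc)
lemma qp_Suc_first: "qpoch a Q (Suc m) = (1 - a) * qpoch (a * Q) Q m"
  using qp_add[of a Q 1 m] by (simp add: qpoch_def)
lemma qp_zero_base[simp]: "qpoch 0 Q m = 1" by (simp add: qpoch_def)

lemma qp_refl:
  assumes "Q \<noteq> 0" "c \<noteq> 0"
  shows "qpoch (c / Q ^ l) Q l * (\<Prod>j<l. Q ^ Suc j) = (-c) ^ l * qpoch (Q / c) Q l"
proof (induction l)
  case 0 then show ?case by simp
next
  case (Suc l)
  have e1: "c / Q ^ Suc l * Q = c / Q ^ l" using assms by (simp add: field_simps)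
  have "qpoch (c / Q ^ Suc l) Q (Suc l) * (\<Prod>j<Suc l. Q ^ Suc j)
      = ((1 - c / Q ^ Suc l) * Q ^ Suc l) * (qpoch (c / Q ^ l) Q l * (\<Prod>j<l. Q ^ Suc j))"
    by (simp only: qp_Suc_first e1 prod.lessThan_Suc) (simp add: algebra_simps)
  also have "\<dots> = (Q ^ Suc l - c) * ((-c) ^ l * qpoch (Q / c) Q l)"
    using assms Suc by (simp add: field_simps)
  also have "\<dots> = (-c) ^ Suc l * qpoch (Q / c) Q (Suc l)"
    using assms by (simp add: qp_Suc field_simps)
  finally show ?case .
qed

definition dil :: "complex \<Rightarrow> complex fps \<Rightarrow> complex fps" where
  "dil c F = Abs_fps (\<lambda>n. c ^ n * F $ n)"

lemma dil_nth[simp]: "dil c F $ n = c ^ n * F $ n" by (simp add: dil_def)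

lemma dil_mult: "dil c (F * G) = dil c F * dil c G"
proof (rule fps_ext)
  fix n
  have "dil c (F * G) $ n = (\<Sum>i=0..n. c ^ i * F $ i * (c ^ (n - i) * G $ (n - i)))"
    by (simp add: fps_mult_nth sum_distrib_left, rule sum.cong, simp,
        simp add: power_add[symmetric] mult_ac)
  then show "dil c (F * G) $ n = (dil c F * dil c G) $ n" by (simp add: fps_mult_nth)
qed

lemma dil_dil: "dil c (dil d F) = dil (d * c) F"
  by (rule fps_ext) (simp add: power_mult_distrib mult_ac)

definition EE :: "complex \<Rightarrow> complex \<Rightarrow> complex fps" where
  "EE Q a = Abs_fps (\<lambda>i. qpoch a Q i / qpoch Q Q i)"

lemma EE_nth[simp]: "EE Q a $ n = qpoch a Q n / qpoch Q Q n" by (simp add: EE_def)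

lemma fps_lin_eq: "(1 - fps_const (c::complex) * fps_X) * F = F - fps_const c * (fps_X * F)"
  by (simp only: left_diff_distrib mult_1_left mult.assoc)
lemma fps_lin_nth: "((1 - fps_const (c::complex) * fps_X) * F) $ Suc m = F $ Suc m - c * F $ m"
  by (simp only: fps_lin_eq fps_sub_nth fps_mult_left_const_nth fps_X_mult_nth) simp
lemma fps_lin_nth0: "((1 - fps_const (c::complex) * fps_X) * F) $ 0 = F $ 0"
  by (simp only: fps_lin_eq fps_sub_nth fps_mult_left_const_nth fps_X_mult_nth) simp

lemma EE_eq:
  assumes QQ: "\<And>m. qpoch Q Q m \<noteq> 0"
  shows "(1 - fps_const 1 * fps_X) * EE Q a = (1 - fps_const a * fps_X) * dil Q (EE Q a)"
proof (rule fps_ext)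
  fix n show "((1 - fps_const 1 * fps_X) * EE Q a) $ n = ((1 - fps_const a * fps_X) * dil Q (EE Q a)) $ n"
  proof (cases n)
    case 0 then show ?thesis by (simp only: fps_lin_nth0) simp
  next
    case (Suc m)
    have h: "qpoch Q Q (Suc m) = qpoch Q Q m * (1 - Q ^ Suc m)" by (simp add: qp_Suc)
    have "1 - Q ^ Suc m \<noteq> 0" using QQ[of "Suc m"] h by auto
    then show ?thesis using Suc QQ[of m] by (simp only: fps_lin_nth) (simp add: qp_Suc h field_simps)
  qed
qed

lemma EE_dil_eq:
  assumes QQ: "\<And>m. qpoch Q Q m \<noteq> 0"
  shows "(1 - fps_const a * fps_X) * dil a (EE Q b) = (1 - fps_const (a*b) * fps_X) * dil (a*Q) (EE Q b)"
proof (rule fps_ext)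
  fix n show "((1 - fps_const a * fps_X) * dil a (EE Q b)) $ n = ((1 - fps_const (a*b) * fps_X) * dil (a*Q) (EE Q b)) $ n"
  proof (cases n)
    case 0 then show ?thesis by (simp only: fps_lin_nth0) simp
  next
    case (Suc m)
    have h: "qpoch Q Q (Suc m) = qpoch Q Q m * (1 - Q ^ Suc m)" by (simp add: qp_Suc)
    have "1 - Q ^ Suc m \<noteq> 0" using QQ[of "Suc m"] h by auto
    then show ?thesis using Suc QQ[of m] by (simp only: fps_lin_nth) (simp add: qp_Suc h field_simps)
  qed
qed

lemma EE_prod:
  assumes QQ: "\<And>m. qpoch Q Q m \<noteq> 0"
  shows "(EE Q a * dil a (EE Q b)) $ m = qpoch (a * b) Q m / qpoch Q Q m"
proof -
  define P where "P = EE Q a * dil a (EE Q b)"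
  have "(1 - fps_const 1 * fps_X) * P = ((1 - fps_const 1 * fps_X) * EE Q a) * dil a (EE Q b)"
    by (simp only: P_def mult.assoc)
  also have "\<dots> = ((1 - fps_const a * fps_X) * dil Q (EE Q a)) * dil a (EE Q b)"
    by (simp only: EE_eq[OF QQ])
  also have "\<dots> = dil Q (EE Q a) * ((1 - fps_const a * fps_X) * dil a (EE Q b))"
    by (simp only: mult_ac)
  also have "\<dots> = dil Q (EE Q a) * ((1 - fps_const (a*b) * fps_X) * dil (a*Q) (EE Q b))"
    by (simp only: EE_dil_eq[OF QQ])
  also have "\<dots> = (1 - fps_const (a*b) * fps_X) * dil Q P"
    by (simp only: P_def dil_mult dil_dil mult_ac)
  finally have eq: "(1 - fps_const 1 * fps_X) * P = (1 - fps_const (a*b) * fps_X) * dil Q P" .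
  have "P $ m = qpoch (a * b) Q m / qpoch Q Q m" for m
  proof (induction m)
    case 0 then show ?case by (simp add: P_def fps_mult_nth)
  next
    case (Suc m)
    have "((1 - fps_const 1 * fps_X) * P) $ Suc m = ((1 - fps_const (a*b) * fps_X) * dil Q P) $ Suc m"
      using eq by simp
    then have e: "P $ Suc m * (1 - Q ^ Suc m) = P $ m * (1 - a * b * Q ^ m)"
      by (simp only: fps_lin_nth) (simp add: algebra_simps)
    have h: "qpoch Q Q (Suc m) = qpoch Q Q m * (1 - Q ^ Suc m)" by (simp add: qp_Suc)
    have "1 - Q ^ Suc m \<noteq> 0" using QQ[of "Suc m"] h by auto
    then have "P $ Suc m = P $ m * (1 - a * b * Q ^ m) / (1 - Q ^ Suc m)" using e by (simp add: field_simps)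
    then show ?case using Suc QQ[of m] \<open>1 - Q ^ Suc m \<noteq> 0\<close> by (simp add: qp_Suc h field_simps)
  qed
  then show ?thesis by (simp add: P_def)
qed

lemma qcv_conv:
  assumes QQ: "\<And>m. qpoch Q Q m \<noteq> 0"
  shows "(\<Sum>i=0..m. qpoch a Q i / qpoch Q Q i * (a ^ (m - i) * (qpoch b Q (m - i) / qpoch Q Q (m - i))))
        = qpoch (a * b) Q m / qpoch Q Q m"
  using EE_prod[OF QQ, of a b m] by (simp add: fps_mult_nth)


lemma prodQ_nz: "Q \<noteq> 0 \<Longrightarrow> (\<Prod>j<l. Q ^ Suc j) \<noteq> (0::complex)"
  by (simp add: prod_zero_iff)

lemma qp_rev:
  assumes Q: "Q \<noteq> 0" and a: "a \<noteq> 0" and i: "i \<le> n"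
  shows "qpoch a Q n * qpoch Q Q (n-i) * Q^i * qpoch (1/Q^n) Q i
       = qpoch a Q (n-i) * a^i * qpoch (Q/(a*Q^n)) Q i * qpoch Q Q n"
proof -
  define P where "P = (\<Prod>j<i. Q ^ Suc j)"
  have P: "P \<noteq> 0" using prodQ_nz[OF Q] by (simp add: P_def)
  have n: "n = (n - i) + i" using i by simp
  have an: "qpoch a Q n = qpoch a Q (n-i) * qpoch (a * Q^n / Q^i) Q i"
    by (subst n, subst qp_add) (use Q i in \<open>simp add: power_diff\<close>)
  have qn: "qpoch Q Q n = qpoch Q Q (n-i) * qpoch (Q^(Suc n) / Q^i) Q i"
    by (subst n, subst qp_add) (use Q i in \<open>simp add: power_diff\<close>)
  have r1: "qpoch (a * Q^n / Q^i) Q i * P = (-(a*Q^n))^i * qpoch (Q/(a*Q^n)) Q i"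
    unfolding P_def by (rule qp_refl) (use Q a in auto)
  have r2: "qpoch (Q^(Suc n) / Q^i) Q i * P = (-(Q^Suc n))^i * qpoch (1/Q^n) Q i"
    using qp_refl[of Q "Q^Suc n" i] Q unfolding P_def by simp
  have "(qpoch a Q n * qpoch Q Q (n-i) * Q^i * qpoch (1/Q^n) Q i) * P
      = qpoch a Q (n-i) * (qpoch (a * Q^n / Q^i) Q i * P) * qpoch Q Q (n-i) * Q^i * qpoch (1/Q^n) Q i"
    by (simp add: an)
  also have "\<dots> = qpoch a Q (n-i) * ((-(a*Q^n))^i * qpoch (Q/(a*Q^n)) Q i) * qpoch Q Q (n-i) * Q^i * qpoch (1/Q^n) Q i"
    by (simp add: r1)
  also have "\<dots> = qpoch a Q (n-i) * qpoch (Q/(a*Q^n)) Q i * qpoch Q Q (n-i) * qpoch (1/Q^n) Q i * ((-(a*Q^n))^i * Q^i)"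
    by (simp only: mult_ac)
  also have "(-(a*Q^n))^i * Q^i = a^i * (-(Q^Suc n))^i"
  proof -
    have "(-(a*Q^n))^i * Q^i = (-(a*Q^n) * Q)^i" by (simp only: power_mult_distrib)
    also have "-(a*Q^n) * Q = a * (-(Q^Suc n))" by simp
    finally show ?thesis by (simp only: power_mult_distrib)
  qed
  also have "qpoch a Q (n-i) * qpoch (Q/(a*Q^n)) Q i * qpoch Q Q (n-i) * qpoch (1/Q^n) Q i * (a^i * (-(Q^Suc n))^i)
      = qpoch a Q (n-i) * a^i * qpoch (Q/(a*Q^n)) Q i * qpoch Q Q (n-i) * ((-(Q^Suc n))^i * qpoch (1/Q^n) Q i)"
    by (simp only: mult_ac)
  also have "\<dots> = qpoch a Q (n-i) * a^i * qpoch (Q/(a*Q^n)) Q i * qpoch Q Q (n-i) * (qpoch (Q^(Suc n) / Q^i) Q i * P)"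
    by (simp only: r2)
  also have "\<dots> = (qpoch a Q (n-i) * a^i * qpoch (Q/(a*Q^n)) Q i * (qpoch Q Q (n-i) * qpoch (Q^(Suc n) / Q^i) Q i)) * P"
    by (simp only: mult_ac)
  also have "\<dots> = (qpoch a Q (n-i) * a^i * qpoch (Q/(a*Q^n)) Q i * qpoch Q Q n) * P"
    by (simp only: qn)
  finally show ?thesis using P by simp
qed

lemma qp_nz_le: "qpoch c Q n \<noteq> 0 \<Longrightarrow> k \<le> n \<Longrightarrow> qpoch c Q k \<noteq> 0"
  using qp_add[of c Q k "n-k"] by auto

lemma qcv:
  assumes Q: "Q \<noteq> 0" and QQ: "\<And>m. qpoch Q Q m \<noteq> 0"
    and c: "c \<noteq> 0" and cn: "qpoch c Q n \<noteq> 0" and x: "x \<noteq> 0"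
  shows "(\<Sum>k\<le>n. qpoch (1/Q^n) Q k * qpoch x Q k * Q^k / (qpoch Q Q k * qpoch c Q k))
       = x^n * qpoch (c/x) Q n / qpoch c Q n"
proof -
  define a where "a = Q / (c * Q^n)"
  have a: "a \<noteq> 0" using Q c by (simp add: a_def)
  have ac: "Q / (a * Q^n) = c" using Q c by (simp add: a_def field_simps)
  define P where "P = (\<Prod>j<n. Q ^ Suc j)"
  have P: "P \<noteq> 0" using prodQ_nz[OF Q] by (simp add: P_def)
  have ra: "qpoch a Q n * P = (-(Q/c))^n * qpoch c Q n"
    using qp_refl[of Q "Q/c" n] Q c unfolding P_def by (simp add: a_def field_simps)
  have rax: "qpoch (a*x) Q n * P = (-(Q*x/c))^n * qpoch (c/x) Q n"
    using qp_refl[of Q "Q*x/c" n] Q c x unfolding P_def by (simp add: a_def field_simps)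
  have an: "qpoch a Q n \<noteq> 0" using ra P cn Q c by auto
  have conv: "(\<Sum>i=0..n. qpoch a Q i / qpoch Q Q i * (a ^ (n - i) * (qpoch x Q (n - i) / qpoch Q Q (n - i))))
        = qpoch (a * x) Q n / qpoch Q Q n" by (rule qcv_conv[OF QQ])
  have "(\<Sum>i=0..n. qpoch a Q i / qpoch Q Q i * (a ^ (n - i) * (qpoch x Q (n - i) / qpoch Q Q (n - i))))
      = (\<Sum>i=0..n. qpoch a Q (n-i) / qpoch Q Q (n-i) * (a ^ i * (qpoch x Q i / qpoch Q Q i)))"
    by (subst sum.atLeastAtMost_rev) (rule sum.cong, auto)
  also have "\<dots> = (\<Sum>i=0..n. qpoch a Q n / qpoch Q Q n * (qpoch (1/Q^n) Q i * qpoch x Q i * Q^i / (qpoch Q Q i * qpoch c Q i)))"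
  proof (rule sum.cong)
    fix i assume "i \<in> {0..n}"
    then have i: "i \<le> n" by simp
    have ci: "qpoch c Q i \<noteq> 0" using qp_nz_le[OF cn i] .
    have h: "qpoch a Q n * qpoch Q Q (n-i) * Q^i * qpoch (1/Q^n) Q i
       = qpoch a Q (n-i) * a^i * qpoch c Q i * qpoch Q Q n"
      using qp_rev[OF Q a i] by (simp add: ac)
    have "qpoch a Q n / qpoch Q Q n * (qpoch (1/Q^n) Q i * qpoch x Q i * Q^i / (qpoch Q Q i * qpoch c Q i))
       = (qpoch a Q n * qpoch Q Q (n-i) * Q^i * qpoch (1/Q^n) Q i) * qpoch x Q i
          / (qpoch Q Q n * qpoch Q Q i * qpoch c Q i * qpoch Q Q (n-i))"
      using QQ[of "n-i"] by (simp add: field_simps)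
    also have "\<dots> = (qpoch a Q (n-i) * a^i * qpoch c Q i * qpoch Q Q n) * qpoch x Q i
          / (qpoch Q Q n * qpoch Q Q i * qpoch c Q i * qpoch Q Q (n-i))"
      by (simp only: h)
    also have "\<dots> = qpoch a Q (n-i) / qpoch Q Q (n-i) * (a ^ i * (qpoch x Q i / qpoch Q Q i))"
      using QQ[of n] QQ[of i] QQ[of "n-i"] ci by (simp add: field_simps)
    finally show "qpoch a Q (n-i) / qpoch Q Q (n-i) * (a ^ i * (qpoch x Q i / qpoch Q Q i))
      = qpoch a Q n / qpoch Q Q n * (qpoch (1/Q^n) Q i * qpoch x Q i * Q^i / (qpoch Q Q i * qpoch c Q i))"
      by simp
  qed simp
  also have "\<dots> = qpoch a Q n / qpoch Q Q n * (\<Sum>k\<le>n. qpoch (1/Q^n) Q k * qpoch x Q k * Q^k / (qpoch Q Q k * qpoch c Q k))"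
    by (simp add: sum_distrib_left atMost_atLeast0)
  finally have "qpoch a Q n / qpoch Q Q n * (\<Sum>k\<le>n. qpoch (1/Q^n) Q k * qpoch x Q k * Q^k / (qpoch Q Q k * qpoch c Q k))
     = qpoch (a * x) Q n / qpoch Q Q n" using conv by simp
  then have "(\<Sum>k\<le>n. qpoch (1/Q^n) Q k * qpoch x Q k * Q^k / (qpoch Q Q k * qpoch c Q k))
     = qpoch (a * x) Q n / qpoch a Q n" using an QQ[of n] by (simp add: field_simps)
  also have "\<dots> = (qpoch (a * x) Q n * P) / (qpoch a Q n * P)" using P by simp
  also have "\<dots> = x^n * qpoch (c/x) Q n / qpoch c Q n"
  proof -
    have e: "-(Q*x/c) = x * (-(Q/c))" by simp
    have K: "(-(Q/c))^n \<noteq> 0" using Q c by simp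
    show ?thesis unfolding ra rax e power_mult_distrib using K cn Q c x by simp
  qed
  finally show ?thesis .
qed


lemma qp_swap:
  assumes Q: "Q \<noteq> 0" and a: "a \<noteq> 0"
  shows "qpoch (a / Q^k) Q l * Q^(k*l) * qpoch (Q / (a * Q^l)) Q k = qpoch a Q l * qpoch (Q / a) Q k"
proof -
  define P where "P = (\<Prod>j<k. Q ^ Suc j)"
  have P: "P \<noteq> 0" using prodQ_nz[OF Q] by (simp add: P_def)
  have e1: "qpoch (a / Q^k) Q (k + l) = qpoch (a / Q^k) Q k * qpoch a Q l"
    using Q by (simp add: qp_add)
  have e2: "qpoch (a / Q^k) Q (l + k) = qpoch (a / Q^k) Q l * qpoch (a * Q^l / Q^k) Q k"
    by (simp add: qp_add)
  have r1: "qpoch (a / Q^k) Q k * P = (-a)^k * qpoch (Q/a) Q k"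
    unfolding P_def by (rule qp_refl[OF Q a])
  have r2: "qpoch (a * Q^l / Q^k) Q k * P = (-(a*Q^l))^k * qpoch (Q/(a*Q^l)) Q k"
    unfolding P_def by (rule qp_refl) (use Q a in auto)
  have "qpoch (a / Q^k) Q l * ((-(a*Q^l))^k * qpoch (Q/(a*Q^l)) Q k) = (-a)^k * qpoch (Q/a) Q k * qpoch a Q l"
  proof -
    have "qpoch (a / Q^k) Q l * ((-(a*Q^l))^k * qpoch (Q/(a*Q^l)) Q k)
        = qpoch (a / Q^k) Q l * (qpoch (a * Q^l / Q^k) Q k * P)" by (simp only: r2)
    also have "\<dots> = qpoch (a / Q^k) Q (l + k) * P" by (simp only: e2 mult_ac)
    also have "\<dots> = qpoch (a / Q^k) Q (k + l) * P" by (simp only: add.commute)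
    also have "\<dots> = (qpoch (a / Q^k) Q k * P) * qpoch a Q l" by (simp only: e1 mult_ac)
    also have "\<dots> = (-a)^k * qpoch (Q/a) Q k * qpoch a Q l" by (simp only: r1)
    finally show ?thesis .
  qed
  moreover have "(-(a*Q^l))^k = (-a)^k * Q^(k*l)"
  proof -
    have "-(a*Q^l) = (-a) * Q^l" by simp
    then have "(-(a*Q^l))^k = (-a)^k * (Q^l)^k" by (simp only: power_mult_distrib)
    then show ?thesis by (simp only: power_mult[symmetric] mult.commute)
  qed
  ultimately have "(-a)^k * (qpoch (a / Q^k) Q l * Q^(k*l) * qpoch (Q/(a*Q^l)) Q k) = (-a)^k * (qpoch a Q l * qpoch (Q/a) Q k)"
    by (simp only: mult_ac)
  then show ?thesis using a by simp
qed

lemma QL_generic: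
  assumes Q: "Q \<noteq> 0" and QQ: "\<And>m. qpoch Q Q m \<noteq> 0"
    and y: "y \<noteq> 0" and x: "x \<noteq> 0" and yn: "qpoch y Q n \<noteq> 0"
    and cn: "qpoch (y / Q^l) Q n \<noteq> 0" and gl: "qpoch (x * Q / (y * Q^n)) Q l \<noteq> 0"
  shows "(\<Sum>k\<le>n. qpoch (1/Q^n) Q k * qpoch x Q k * Q^k / (qpoch Q Q k * qpoch y Q k)
            * (qpoch ((Q/y) / Q^k) Q l * Q^(k*l)))
       = x^n * qpoch (y/x) Q n / qpoch y Q n *
         (qpoch (Q / (y * Q^n)) Q l * qpoch (Q * x / y) Q l / qpoch (x * Q / (y * Q^n)) Q l)"
proof -
  define c where "c = y / Q^l"
  have c: "c \<noteq> 0" using y Q by (simp add: c_def)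
  have cn': "qpoch c Q n \<noteq> 0" using cn by (simp add: c_def)
  have "(\<Sum>k\<le>n. qpoch (1/Q^n) Q k * qpoch x Q k * Q^k / (qpoch Q Q k * qpoch y Q k)
            * (qpoch ((Q/y) / Q^k) Q l * Q^(k*l)))
      = (\<Sum>k\<le>n. qpoch (Q/y) Q l * (qpoch (1/Q^n) Q k * qpoch x Q k * Q^k / (qpoch Q Q k * qpoch c Q k)))"
  proof (rule sum.cong)
    fix k assume "k \<in> {..n}"
    then have k: "k \<le> n" by simp
    have yk: "qpoch y Q k \<noteq> 0" using qp_nz_le[OF yn k] .
    have ck: "qpoch c Q k \<noteq> 0" using qp_nz_le[OF cn' k] .
    have sw: "qpoch ((Q/y) / Q^k) Q l * Q^(k*l) * qpoch c Q k = qpoch (Q/y) Q l * qpoch y Q k"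
      using qp_swap[of Q "Q/y" k l] Q y by (simp add: c_def field_simps)
    have "qpoch ((Q/y) / Q^k) Q l * Q^(k*l) = qpoch (Q/y) Q l * qpoch y Q k / qpoch c Q k"
      using sw ck by (simp add: field_simps)
    then show "qpoch (1/Q^n) Q k * qpoch x Q k * Q^k / (qpoch Q Q k * qpoch y Q k)
            * (qpoch ((Q/y) / Q^k) Q l * Q^(k*l))
       = qpoch (Q/y) Q l * (qpoch (1/Q^n) Q k * qpoch x Q k * Q^k / (qpoch Q Q k * qpoch c Q k))"
      using yk ck QQ[of k] by (simp add: field_simps)
  qed simp
  also have "\<dots> = qpoch (Q/y) Q l * (x^n * qpoch (c/x) Q n / qpoch c Q n)"
    by (simp only: sum_distrib_left[symmetric] qcv[OF Q QQ c cn' x])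
  also have "\<dots> = x^n * qpoch (y/x) Q n / qpoch y Q n *
         (qpoch (Q / (y * Q^n)) Q l * qpoch (Q * x / y) Q l / qpoch (x * Q / (y * Q^n)) Q l)"
  proof -
    have h1: "qpoch c Q n * Q^(n*l) * qpoch (Q / (y * Q^n)) Q l = qpoch (Q/y) Q l * qpoch y Q n"
      using qp_swap[of Q "Q/y" n l] Q y by (simp add: c_def field_simps)
    have h2: "qpoch (c/x) Q n * Q^(n*l) * qpoch (x * Q / (y * Q^n)) Q l = qpoch (Q * x / y) Q l * qpoch (y/x) Q n"
      using qp_swap[of Q "Q*x/y" n l] Q y x by (simp add: c_def field_simps)
    define A where "A = qpoch (Q/y) Q l"
    define B where "B = qpoch (c/x) Q n"
    define Cn where "Cn = qpoch c Q n"
    define al where "al = qpoch (Q / (y * Q^n)) Q l"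
    define be where "be = qpoch (Q * x / y) Q l"
    define ga where "ga = qpoch (x * Q / (y * Q^n)) Q l"
    define Y where "Y = qpoch y Q n"
    define Yx where "Yx = qpoch (y/x) Q n"
    define W where "W = Q^(n*l)"
    have W: "W \<noteq> 0" using Q by (simp add: W_def)
    have h1': "Cn * W * al = A * Y" using h1 by (simp add: Cn_def W_def al_def A_def Y_def)
    have h2': "B * W * ga = be * Yx" using h2 by (simp add: B_def W_def ga_def be_def Yx_def)
    have Cn: "Cn \<noteq> 0" using cn' by (simp add: Cn_def)
    have Y: "Y \<noteq> 0" using yn by (simp add: Y_def)
    have ga: "ga \<noteq> 0" using gl by (simp add: ga_def)
    have "A * (B / Cn) = Yx / Y * (al * be / ga)"
    proof -
      have "A * (B / Cn) * (Y * ga) = (A * Y) * (B * ga) / Cn" by (simp add: field_simps)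
      also have "\<dots> = (Cn * W * al) * (B * ga) / Cn" by (simp only: h1')
      also have "\<dots> = al * (B * W * ga)" using Cn by (simp add: field_simps)
      also have "\<dots> = al * (be * Yx)" by (simp only: h2')
      finally have "A * (B / Cn) * (Y * ga) = al * (be * Yx)" .
      then show ?thesis using Y ga by (simp add: field_simps)
    qed
    then have "x^n * (A * (B / Cn)) = x^n * (Yx / Y * (al * be / ga))" by simp
    then show ?thesis by (simp add: A_def B_def Cn_def al_def be_def ga_def Y_def Yx_def mult_ac)
  qed
  finally show ?thesis .
qed


lemma isCont_qp [continuous_intros]: "isCont f y0 \<Longrightarrow> isCont (\<lambda>y. qpoch (f y) Q k) y0"
  unfolding qpoch_def by (intro continuous_prod continuous_intros) auto

lemma qp_zero_iff: "qpoch a Q n = 0 \<longleftrightarrow> (\<exists>j<n. a * Q^j = 1)"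
  by (auto simp: qpoch_def prod_zero_iff)

lemma QL_all:
  assumes Q: "Q \<noteq> 0" and QQ: "\<And>m. qpoch Q Q m \<noteq> 0"
    and y0: "y0 \<noteq> 0" and x: "x \<noteq> 0" and yn: "qpoch y0 Q n \<noteq> 0"
    and gl: "qpoch (x * Q / (y0 * Q^n)) Q l \<noteq> 0"
  shows "(\<Sum>k\<le>n. qpoch (1/Q^n) Q k * qpoch x Q k * Q^k / (qpoch Q Q k * qpoch y0 Q k)
            * (qpoch ((Q/y0) / Q^k) Q l * Q^(k*l)))
       = x^n * qpoch (y0/x) Q n / qpoch y0 Q n *
         (qpoch (Q / (y0 * Q^n)) Q l * qpoch (Q * x / y0) Q l / qpoch (x * Q / (y0 * Q^n)) Q l)"
proof -
  define F where "F = (\<lambda>y. (\<Sum>k\<le>n. qpoch (1/Q^n) Q k * qpoch x Q k * Q^k / (qpoch Q Q k * qpoch y Q k)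
            * (qpoch ((Q/y) / Q^k) Q l * Q^(k*l))))"
  define R where "R = (\<lambda>y. x^n * qpoch (y/x) Q n / qpoch y Q n *
         (qpoch (Q / (y * Q^n)) Q l * qpoch (Q * x / y) Q l / qpoch (x * Q / (y * Q^n)) Q l))"
  have ykn: "qpoch y0 Q k \<noteq> 0" if "k \<le> n" for k using qp_nz_le[OF yn that] .
  have cF: "isCont F y0" unfolding F_def
    apply (intro continuous_intros) using QQ ykn y0 Q by auto
  have cR: "isCont R y0" unfolding R_def
    apply (intro continuous_intros) using x yn y0 Q gl by auto
  have ev1: "\<forall>\<^sub>F y in at y0. y \<noteq> 0"
    using tendsto_imp_eventually_ne[of "\<lambda>y. y" y0 "at y0"] y0 by (simp add: tendsto_ident_at)
  have ev2: "\<forall>\<^sub>F y in at y0. qpoch y Q n \<noteq> 0"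
    using tendsto_imp_eventually_ne[of "\<lambda>y. qpoch y Q n" "qpoch y0 Q n" "at y0"] yn
      isCont_qp[OF continuous_ident, of y0 Q n] by (simp add: isCont_def)
  have ev3: "\<forall>\<^sub>F y in at y0. qpoch (x * Q / (y * Q^n)) Q l \<noteq> 0"
  proof -
    have "isCont (\<lambda>y. qpoch (x * Q / (y * Q^n)) Q l) y0"
      apply (intro continuous_intros) using y0 Q by auto
    then show ?thesis
      using tendsto_imp_eventually_ne[of "\<lambda>y. qpoch (x * Q / (y * Q^n)) Q l" _ "at y0"] gl
      by (simp add: isCont_def)
  qed
  have ev4: "\<forall>\<^sub>F y in at y0. qpoch (y / Q^l) Q n \<noteq> 0"
  proof -
    have "\<forall>\<^sub>F y in at y0. \<forall>z\<in>(\<lambda>j. Q^l / Q^j) ` {..<n}. y \<noteq> z"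
      by (rule eventually_ball_finite) (auto intro: eventually_neq_at_within)
    then show ?thesis
    proof (rule eventually_mono)
      fix y assume h: "\<forall>z\<in>(\<lambda>j. Q^l / Q^j) ` {..<n}. y \<noteq> z"
      show "qpoch (y / Q^l) Q n \<noteq> 0"
      proof
        assume "qpoch (y / Q^l) Q n = 0"
        then obtain j where j: "j < n" "y / Q^l * Q^j = 1" by (auto simp: qp_zero_iff)
        then have "y = Q^l / Q^j" using Q by (simp add: field_simps)
        then show False using h j by auto
      qed
    qed
  qed
  have ev: "\<forall>\<^sub>F y in at y0. F y = R y"
    using ev1 ev2 ev3 ev4
  proof eventually_elim
    case (elim y)
    show ?case unfolding F_def R_def by (rule QL_generic[OF Q QQ elim(1) x elim(2) elim(4) elim(3)])
  qed
  have t1: "(F \<longlongrightarrow> F y0) (at y0)" using cF by (simp add: isCont_def)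
  have t2: "(R \<longlongrightarrow> R y0) (at y0)" using cR by (simp add: isCont_def)
  have "(R \<longlongrightarrow> F y0) (at y0)" using t1 tendsto_cong[OF ev] by simp
  then have "F y0 = R y0" using t2 tendsto_unique[OF at_neq_bot] by blast
  then show ?thesis by (simp add: F_def R_def)
qed


lemma E1_inst:
  assumes Q: "Q \<noteq> 0" and QQ: "\<And>m. qpoch Q Q m \<noteq> 0"
  shows "Q^(k*m) / qpoch Q Q m
      = (\<Sum>i=0..m. qpoch (a / Q^k) Q i * Q^(k*i) / qpoch Q Q i * (a^(m-i) / qpoch Q Q (m-i)))"
proof -
  have "(\<Sum>i=0..m. qpoch (a / Q^k) Q i / qpoch Q Q i * ((a / Q^k) ^ (m - i) * (qpoch 0 Q (m - i) / qpoch Q Q (m - i))))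
        = qpoch ((a / Q^k) * 0) Q m / qpoch Q Q m" by (rule qcv_conv[OF QQ])
  then have e: "(\<Sum>i=0..m. qpoch (a / Q^k) Q i / qpoch Q Q i * ((a / Q^k) ^ (m - i) / qpoch Q Q (m - i)))
        = 1 / qpoch Q Q m" by simp
  have "Q^(k*m) / qpoch Q Q m = Q^(k*m) * (1 / qpoch Q Q m)" by simp
  also have "\<dots> = (\<Sum>i=0..m. Q^(k*m) * (qpoch (a / Q^k) Q i / qpoch Q Q i * ((a / Q^k) ^ (m - i) / qpoch Q Q (m - i))))"
    by (simp only: e[symmetric] sum_distrib_left)
  also have "\<dots> = (\<Sum>i=0..m. qpoch (a / Q^k) Q i * Q^(k*i) / qpoch Q Q i * (a^(m-i) / qpoch Q Q (m-i)))"
  proof (rule sum.cong)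
    fix i assume "i \<in> {0..m}"
    then have i: "i \<le> m" by simp
    have "Q^(k*m) = Q^(k*i) * (Q^k)^(m-i)"
      using i by (simp add: power_add[symmetric] power_mult[symmetric] diff_mult_distrib2)
    moreover have "(Q^k)^(m-i) * (a / Q^k)^(m-i) = a^(m-i)"
      using Q by (simp add: power_mult_distrib[symmetric])
    ultimately have e2: "Q^(k*m) * (a / Q^k)^(m-i) = Q^(k*i) * a^(m-i)" by (simp add: mult.assoc)
    have "Q^(k*m) * (qpoch (a / Q^k) Q i / qpoch Q Q i * ((a / Q^k) ^ (m - i) / qpoch Q Q (m - i)))
       = (Q^(k*m) * (a / Q^k)^(m-i)) * qpoch (a / Q^k) Q i * inverse (qpoch Q Q i) * inverse (qpoch Q Q (m - i))"
      by (simp add: divide_inverse mult_ac)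
    also have "\<dots> = qpoch (a / Q^k) Q i * Q^(k*i) / qpoch Q Q i * (a^(m-i) / qpoch Q Q (m-i))"
      by (simp only: e2) (simp add: divide_inverse mult_ac)
    finally show "Q^(k*m) * (qpoch (a / Q^k) Q i / qpoch Q Q i * ((a / Q^k) ^ (m - i) / qpoch Q Q (m - i)))
      = qpoch (a / Q^k) Q i * Q^(k*i) / qpoch Q Q i * (a^(m-i) / qpoch Q Q (m-i))" .
  qed simp
  finally show ?thesis .
qed

lemma key:
  assumes Q: "Q \<noteq> 0" and QQ: "\<And>m. qpoch Q Q m \<noteq> 0"
    and y: "y \<noteq> 0" and x: "x \<noteq> 0" and yn: "qpoch y Q n \<noteq> 0"
    and gl: "\<And>l. qpoch (x * Q / (y * Q^n)) Q l \<noteq> 0"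
  shows "(\<Sum>k\<le>n. qpoch (1/Q^n) Q k * qpoch x Q k * Q^k / (qpoch Q Q k * qpoch y Q k) * Q^(k*m)) / qpoch Q Q m
       = x^n * qpoch (y/x) Q n / qpoch y Q n *
         (\<Sum>i=0..m. qpoch (Q / (y * Q^n)) Q i * qpoch (Q * x / y) Q i
              / (qpoch (x * Q / (y * Q^n)) Q i * qpoch Q Q i) * ((Q/y)^(m-i) / qpoch Q Q (m-i)))"
proof -
  define h where "h = (\<lambda>k. qpoch (1/Q^n) Q k * qpoch x Q k * Q^k / (qpoch Q Q k * qpoch y Q k))"
  define C where "C = x^n * qpoch (y/x) Q n / qpoch y Q n"
  define B where "B = (\<lambda>i. qpoch (Q / (y * Q^n)) Q i * qpoch (Q * x / y) Q i / qpoch (x * Q / (y * Q^n)) Q i)"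
  define a where "a = Q / y"
  have ql: "(\<Sum>k\<le>n. h k * (qpoch (a / Q^k) Q i * Q^(k*i))) = C * B i" for i
    unfolding h_def C_def B_def a_def by (rule QL_all[OF Q QQ y x yn gl])
  have "(\<Sum>k\<le>n. h k * Q^(k*m)) / qpoch Q Q m = (\<Sum>k\<le>n. h k * (Q^(k*m) / qpoch Q Q m))"
    by (simp add: sum_divide_distrib)
  also have "\<dots> = (\<Sum>k\<le>n. h k * (\<Sum>i=0..m. qpoch (a / Q^k) Q i * Q^(k*i) / qpoch Q Q i * (a^(m-i) / qpoch Q Q (m-i))))"
    by (simp only: E1_inst[OF Q QQ, where a=a])
  also have "\<dots> = (\<Sum>i=0..m. (\<Sum>k\<le>n. h k * (qpoch (a / Q^k) Q i * Q^(k*i))) / qpoch Q Q i * (a^(m-i) / qpoch Q Q (m-i)))"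
    by (simp add: sum_distrib_left sum_divide_distrib sum_distrib_right mult_ac sum.swap[of _ "{..n}"])
  also have "\<dots> = (\<Sum>i=0..m. C * B i / qpoch Q Q i * (a^(m-i) / qpoch Q Q (m-i)))"
    by (simp only: ql)
  also have "\<dots> = C * (\<Sum>i=0..m. B i / qpoch Q Q i * (a^(m-i) / qpoch Q Q (m-i)))"
    by (simp add: sum_distrib_left mult_ac)
  finally show ?thesis by (simp add: h_def C_def B_def a_def mult_ac)
qed


lemma growth:
  fixes s \<rho> :: "nat \<Rightarrow> complex"
  assumes rec: "\<And>m. s (Suc m) = s m * \<rho> m" and lim: "\<rho> \<longlonglongrightarrow> 1" and th: "\<theta> > 1"
  shows "\<exists>K. \<forall>m. norm (s m) \<le> K * \<theta>^m"
proof -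
  have "(\<lambda>m. norm (\<rho> m)) \<longlonglongrightarrow> 1" using tendsto_norm[OF lim] by simp
  then have "\<forall>\<^sub>F m in sequentially. norm (\<rho> m) < \<theta>" using th by (rule order_tendstoD(2))
  then obtain N where N: "\<And>m. m \<ge> N \<Longrightarrow> norm (\<rho> m) \<le> \<theta>"
    unfolding eventually_sequentially by (meson less_imp_le)
  define K where "K = (\<Sum>i\<le>N. norm (s i))"
  have Ki: "norm (s i) \<le> K" if "i \<le> N" for i
    unfolding K_def using that by (intro member_le_sum) auto
  have big: "norm (s (N + d)) \<le> norm (s N) * \<theta>^d" for d
  proof (induction d)
    case 0 then show ?case by simp
  next
    case (Suc d)
    have "norm (s (N + Suc d)) = norm (s (N + d)) * norm (\<rho> (N + d))" by (simp add: rec norm_mult)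
    also have "\<dots> \<le> (norm (s N) * \<theta>^d) * \<theta>"
      by (rule mult_mono) (use Suc N[of "N+d"] th in auto)
    finally show ?case by (simp add: mult_ac)
  qed
  have "norm (s m) \<le> K * \<theta>^m" for m
  proof (cases "m \<le> N")
    case True
    have "norm (s m) \<le> K" using Ki[OF True] .
    also have "\<dots> \<le> K * \<theta>^m"
    proof -
      have "0 \<le> K" using Ki[of 0] by (meson le0 norm_ge_zero order_trans)
      moreover have "1 \<le> \<theta>^m" using th by simp
      ultimately show ?thesis by (metis mult_left_mono mult.right_neutral)
    qed
    finally show ?thesis .
  next
    case False
    then obtain d where d: "m = N + d" by (metis le_add_diff_inverse nat_le_linear)
    have "norm (s m) \<le> norm (s N) * \<theta>^d" using big d by simp
    also have "\<dots> \<le> K * \<theta>^m"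
    proof (rule mult_mono)
      show "norm (s N) \<le> K" using Ki by simp
      show "\<theta>^d \<le> \<theta>^m" using th d by (intro power_increasing) auto
      show "0 \<le> K" using Ki[of 0] by (meson le0 norm_ge_zero order_trans)
    qed (use th in simp)
    finally show ?thesis .
  qed
  then show ?thesis by blast
qed

lemma growth_qp:
  fixes Q :: complex
  assumes Qn: "norm Q < 1" and th: "\<theta> > 1"
  shows "\<exists>K. \<forall>m. norm (qpoch a Q m * qpoch b Q m * qpoch c Q m / (qpoch d Q m * qpoch e Q m)) \<le> K * \<theta>^m"
proof (rule growth[OF _ _ th])
  show "qpoch a Q (Suc m) * qpoch b Q (Suc m) * qpoch c Q (Suc m) / (qpoch d Q (Suc m) * qpoch e Q (Suc m))
     = qpoch a Q m * qpoch b Q m * qpoch c Q m / (qpoch d Q m * qpoch e Q m) *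
       ((1 - a*Q^m) * (1 - b*Q^m) * (1 - c*Q^m) / ((1 - d*Q^m) * (1 - e*Q^m)))" for m
    by (simp add: qp_Suc divide_inverse mult_ac)
  have "(\<lambda>m. Q^m) \<longlonglongrightarrow> 0" using Qn by (rule LIMSEQ_power_zero)
  then show "(\<lambda>m. (1 - a*Q^m) * (1 - b*Q^m) * (1 - c*Q^m) / ((1 - d*Q^m) * (1 - e*Q^m))) \<longlonglongrightarrow> 1"
    using Qn by (auto intro!: tendsto_eq_intros)
qed


lemma mono5:
  fixes a1 a2 a3 a4 a5 b1 b2 b3 b4 b5 :: real
  assumes "0 \<le> a1" "0 \<le> a2" "0 \<le> a3" "0 \<le> a4" "0 \<le> a5"
    and "a1 \<le> b1" "a2 \<le> b2" "a3 \<le> b3" "a4 \<le> b4" "a5 \<le> b5"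
  shows "a1 * a2 * a3 * a4 * a5 \<le> b1 * b2 * b3 * b4 * b5"
proof -
  have "a1 * a2 \<le> b1 * b2" using assms by (intro mult_mono) auto
  moreover have "0 \<le> a1 * a2" using assms by simp
  ultimately have "a1 * a2 * a3 \<le> b1 * b2 * b3" using assms by (intro mult_mono) auto
  moreover have "0 \<le> a1 * a2 * a3" using assms by simp
  ultimately have "a1 * a2 * a3 * a4 \<le> b1 * b2 * b3 * b4" using assms by (intro mult_mono) auto
  moreover have "0 \<le> a1 * a2 * a3 * a4" using assms by simp
  ultimately show ?thesis using assms by (intro mult_mono) auto
qed

lemma bij_diag: "bij_betw (\<lambda>(m, i). (i, m - i)) (SIGMA m:UNIV. {0..m}) (UNIV :: (nat \<times> nat) set)"
  by (rule bij_betw_byWitness[where f'="\<lambda>(k, j). (k + j, k)"]) auto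


lemma main_Q:
  fixes Q x y r f g v w u :: complex and n :: nat
  assumes Q: "Q \<noteq> 0" and Qn: "norm Q < 1" and QQ: "\<And>m. qpoch Q Q m \<noteq> 0"
    and y: "y \<noteq> 0" and x: "x \<noteq> 0"
    and yn: "qpoch y Q n \<noteq> 0"
    and gl: "\<And>m. qpoch (x * Q / (y * Q ^ n)) Q m \<noteq> 0"
    and u1: "norm u < 1"
    and u2: "norm (u * Q / y) < 1"
  shows "(\<Sum>k\<le>n. qpoch (1 / Q ^ n) Q k * qpoch x Q k * Q ^ k / (qpoch Q Q k * qpoch y Q k)
                   * phi32 r f g v w Q (u * Q ^ k))
       = x ^ n * qpoch (y / x) Q n / qpoch y Q n
         * infsum (\<lambda>(k, j). qpoch r Q (k + j) * qpoch f Q (k + j) * qpoch g Q (k + j)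
                     / (qpoch Q Q j * qpoch v Q (k + j) * qpoch w Q (k + j))
                     * (qpoch (Q / (y * Q ^ n)) Q k * qpoch (Q * x / y) Q k)
                     / (qpoch (x * Q / (y * Q ^ n)) Q k * qpoch Q Q k)
                     * u ^ (k + j) * (Q / y) ^ j)
                  (UNIV :: (nat \<times> nat) set)"
proof -
  define sA where "sA = (\<lambda>m. qpoch r Q m * qpoch f Q m * qpoch g Q m / (qpoch v Q m * qpoch w Q m))"
  define sB where "sB = (\<lambda>k. qpoch (Q / (y * Q ^ n)) Q k * qpoch (Q * x / y) Q k / (qpoch (x * Q / (y * Q ^ n)) Q k * qpoch Q Q k))"
  define sQ where "sQ = (\<lambda>j. 1 / qpoch Q Q j)"
  define C where "C = x ^ n * qpoch (y / x) Q n / qpoch y Q n"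
  define T where "T = (\<lambda>m. \<Sum>i=0..m. sB i * ((Q/y)^(m-i) / qpoch Q Q (m-i)))"
  define d where "d = (\<lambda>m. sA m * u^m * T m)"
  define wk where "wk = (\<lambda>k. qpoch (1 / Q ^ n) Q k * qpoch x Q k * Q ^ k / (qpoch Q Q k * qpoch y Q k))"
  define tm where "tm = (\<lambda>(k, j). qpoch r Q (k + j) * qpoch f Q (k + j) * qpoch g Q (k + j)
                     / (qpoch Q Q j * qpoch v Q (k + j) * qpoch w Q (k + j))
                     * (qpoch (Q / (y * Q ^ n)) Q k * qpoch (Q * x / y) Q k)
                     / (qpoch (x * Q / (y * Q ^ n)) Q k * qpoch Q Q k)
                     * u ^ (k + j) * (Q / y) ^ j)"
  define \<rho> where "\<rho> = max (norm u) (norm (u * Q / y))"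
  have \<rho>1: "\<rho> < 1" using u1 u2 by (simp add: \<rho>_def)
  have \<rho>0: "0 \<le> \<rho>" by (simp add: \<rho>_def le_max_iff_disj)
  define \<theta> where "\<theta> = 1 + (1 - \<rho>) / 4"
  have th: "\<theta> > 1" using \<rho>1 by (simp add: \<theta>_def)
  define c where "c = \<theta> * \<theta> * \<rho>"
  have c0: "0 \<le> c" using th \<rho>0 by (simp add: c_def)
  have c1: "c < 1"
  proof -
    have "c = \<rho> + \<rho> * (1 - \<rho>) / 2 + \<rho> * ((1 - \<rho>) / 4)^2" by (simp add: c_def \<theta>_def power2_eq_square field_simps)
    also have "\<dots> \<le> \<rho> + (1 - \<rho>) / 2 + (1 - \<rho>) / 16"
    proof -
      have "\<rho> * (1 - \<rho>) / 2 \<le> (1 - \<rho>) / 2" using \<rho>0 \<rho>1 by (simp add: mult_le_cancel_right1 divide_right_mono)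
      moreover have "\<rho> * ((1 - \<rho>) / 4)^2 \<le> (1 - \<rho>) / 16"
      proof -
        have "((1 - \<rho>) / 4)^2 \<le> (1 - \<rho>) / 16" using \<rho>0 \<rho>1 by (simp add: power2_eq_square field_simps) (simp add: mult_le_cancel_right1 mult_right_le_one_le)
        moreover have "\<rho> * ((1 - \<rho>) / 4)^2 \<le> ((1 - \<rho>) / 4)^2" using \<rho>0 \<rho>1 by (simp add: mult_le_cancel_right1)
        ultimately show ?thesis by linarith
      qed
      ultimately show ?thesis by linarith
    qed
    also have "\<dots> < 1" using \<rho>1 by (simp add: field_simps)
    finally show ?thesis .
  qed
  obtain K1 where K1: "\<And>m. norm (sA m) \<le> K1 * \<theta>^m"
    using growth_qp[OF Qn th, of r f g v w] unfolding sA_def by blast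
  obtain K2 where K2: "\<And>m. norm (sB m) \<le> K2 * \<theta>^m"
    using growth_qp[OF Qn th, of "Q / (y * Q ^ n)" "Q * x / y" 0 "x * Q / (y * Q ^ n)" Q] unfolding sB_def by auto
  obtain K3 where K3: "\<And>m. norm (sQ m) \<le> K3 * \<theta>^m"
    using growth_qp[OF Qn th, of 0 0 0 Q 0] unfolding sQ_def by auto
  have K1p: "0 \<le> K1" using K1[of 0] norm_ge_zero[of "sA 0"] by (simp del: norm_ge_zero)
  have K2p: "0 \<le> K2" using K2[of 0] norm_ge_zero[of "sB 0"] by (simp del: norm_ge_zero)
  have K3p: "0 \<le> K3" using K3[of 0] norm_ge_zero[of "sQ 0"] by (simp del: norm_ge_zero)

  have sumk: "summable (\<lambda>m. sA m * (u * Q ^ k) ^ m / qpoch Q Q m)" for k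
  proof (rule summable_comparison_test')
    show "summable (\<lambda>m. K1 * K3 * c^m)" using c0 c1 by (intro summable_mult summable_geometric) simp
    fix m :: nat
    have "norm (sA m * (u * Q ^ k) ^ m / qpoch Q Q m) = norm (sA m) * norm (sQ m) * norm u ^ m * (norm Q ^ k) ^ m * 1"
      by (simp add: sQ_def norm_mult norm_divide norm_power power_mult_distrib)
    also have "\<dots> \<le> (K1 * \<theta>^m) * (K3 * \<theta>^m) * \<rho> ^ m * 1 * 1"
      apply (rule mono5)
      using K1[of m] K3[of m] Qn by (auto simp: \<rho>_def power_mono power_le_one)
    also have "\<dots> = K1 * K3 * c^m" by (simp add: c_def power_mult_distrib mult_ac)
    finally show "norm (sA m * (u * Q ^ k) ^ m / qpoch Q Q m) \<le> K1 * K3 * c^m" .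
  qed
  have "(\<Sum>k\<le>n. wk k * phi32 r f g v w Q (u * Q ^ k))
      = (\<Sum>k\<le>n. (\<Sum>m. wk k * (sA m * (u * Q ^ k) ^ m / qpoch Q Q m)))"
  proof (rule sum.cong)
    fix k
    have "phi32 r f g v w Q (u * Q ^ k) = (\<Sum>m. sA m * (u * Q ^ k) ^ m / qpoch Q Q m)"
      by (simp only: phi32_def sA_def)
    then show "wk k * phi32 r f g v w Q (u * Q ^ k) = (\<Sum>m. wk k * (sA m * (u * Q ^ k) ^ m / qpoch Q Q m))"
      using suminf_mult[OF sumk[of k], of "wk k"] by simp
  qed simp
  also have "\<dots> = (\<Sum>m. (\<Sum>k\<le>n. wk k * (sA m * (u * Q ^ k) ^ m / qpoch Q Q m)))"
    by (rule suminf_sum[symmetric]) (intro summable_mult sumk)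
  also have "\<dots> = (\<Sum>m. C * d m)"
  proof (rule arg_cong[where f=suminf], rule ext)
    fix m
    have "(\<Sum>k\<le>n. wk k * (sA m * (u * Q ^ k) ^ m / qpoch Q Q m))
        = sA m * u^m * ((\<Sum>k\<le>n. wk k * Q^(k*m)) / qpoch Q Q m)"
      by (simp add: sum_distrib_left sum_divide_distrib power_mult_distrib power_mult mult_ac)
    also have "(\<Sum>k\<le>n. wk k * Q^(k*m)) / qpoch Q Q m = C * T m"
      unfolding wk_def C_def T_def sB_def by (rule key[OF Q QQ y x yn gl])
    finally show "(\<Sum>k\<le>n. wk k * (sA m * (u * Q ^ k) ^ m / qpoch Q Q m)) = C * d m"
      by (simp add: d_def mult_ac)
  qed
  finally have LHS: "(\<Sum>k\<le>n. wk k * phi32 r f g v w Q (u * Q ^ k)) = (\<Sum>m. C * d m)" .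

  have term_eq: "tm (k, j) = sA (k + j) * sQ j * sB k * u^(k+j) * (Q/y)^j" for k j
    by (simp add: tm_def sA_def sB_def sQ_def divide_inverse mult_ac)
  define G where "G = (\<lambda>(k::nat, j::nat). K1 * K2 * K3 * c^k * c^j)"
  have bound: "norm (tm kj) \<le> G kj" for kj
  proof -
    obtain k j where kj: "kj = (k, j)" by force
    have "u^(k+j) * (Q/y)^j = u^k * (u * Q / y)^j"
    proof -
      have "u * Q / y = u * (Q/y)" by simp
      then show ?thesis by (simp only: power_add power_mult_distrib mult.assoc)
    qed
    then have "tm (k, j) = sA (k + j) * sQ j * sB k * (u^k * (u * Q / y)^j)"
      by (simp add: term_eq mult.assoc)
    then have "norm (tm (k, j)) = norm (sA (k + j)) * norm (sQ j) * norm (sB k) * norm u ^ k * norm (u * Q / y) ^ j"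
      by (simp only: norm_mult norm_power mult.assoc)
    also have "\<dots> \<le> (K1 * \<theta>^(k+j)) * (K3 * \<theta>^j) * (K2 * \<theta>^k) * \<rho>^k * \<rho>^j"
      apply (rule mono5)
      using K1[of "k+j"] K2[of k] K3[of j] by (auto simp: \<rho>_def power_mono)
    also have "\<dots> = G (k, j)" by (simp add: G_def c_def power_add power_mult_distrib mult_ac)
    finally show ?thesis by (simp add: kj)
  qed
  have Gsum: "G summable_on UNIV"
  proof -
    have "G summable_on (SIGMA k:UNIV. UNIV)"
    proof (rule summable_on_SigmaI[where g="\<lambda>k. K1 * K2 * K3 * c^k * (1 / (1 - c))"])
      fix k :: nat
      have "(\<lambda>j. K1 * K2 * K3 * c^k * c^j) sums (K1 * K2 * K3 * c^k * (1 / (1 - c)))"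
        using c0 c1 by (intro sums_mult geometric_sums) simp
      then show "((\<lambda>j. G (k, j)) has_sum (K1 * K2 * K3 * c^k * (1 / (1 - c)))) UNIV"
        unfolding G_def using K1p K2p K3p c0 by (intro sums_nonneg_imp_has_sum) auto
    next
      show "(\<lambda>k. K1 * K2 * K3 * c^k * (1 / (1 - c))) summable_on UNIV"
        using c0 c1 K1p K2p K3p
        by (intro summable_nonneg_imp_summable_on summable_mult2 summable_mult summable_geometric) auto
    next
      fix k j show "0 \<le> G (k, j)" unfolding G_def using K1p K2p K3p c0 by auto
    qed
    then show ?thesis by simp
  qed
  have tsum: "tm summable_on UNIV"
    by (rule abs_summable_summable, rule Infinite_Sum.abs_summable_on_comparison_test'[OF Gsum]) (use bound in auto)
  have bij: "bij_betw (\<lambda>(m, i). (i, m - i)) (SIGMA m:UNIV. {0..m}) (UNIV :: (nat \<times> nat) set)"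
    by (rule bij_diag)
  have ts2: "(\<lambda>(m, i). tm (i, m - i)) summable_on (SIGMA m:UNIV. {0..m})"
    using summable_on_reindex_bij_betw[OF bij, of tm] tsum by (simp add: case_prod_unfold)
  have "infsum tm UNIV = infsum (\<lambda>(m, i). tm (i, m - i)) (SIGMA m:UNIV. {0..m})"
    using infsum_reindex_bij_betw[OF bij, of tm] by (simp add: case_prod_unfold)
  also have "\<dots> = infsum (\<lambda>m. infsum (\<lambda>i. tm (i, m - i)) {0..m}) UNIV"
    using infsum_Sigma'_banach[OF ts2] by simp
  also have "\<dots> = infsum d UNIV"
  proof (rule infsum_cong)
    fix m
    have "infsum (\<lambda>i. tm (i, m - i)) {0..m} = (\<Sum>i=0..m. tm (i, m - i))" by simp
    also have "\<dots> = d m"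
      unfolding d_def T_def
      by (simp add: term_eq sum_distrib_left sQ_def mult_ac)
    finally show "infsum (\<lambda>i. tm (i, m - i)) {0..m} = d m" .
  qed
  finally have RHS1: "infsum tm UNIV = infsum d UNIV" .
  have dsum: "d summable_on UNIV"
  proof -
    have "(\<lambda>m. infsum (\<lambda>i. tm (i, m - i)) {0..m}) summable_on UNIV"
      using summable_on_Sigma_banach[OF ts2] by simp
    moreover have "(\<lambda>m. infsum (\<lambda>i. tm (i, m - i)) {0..m}) = d"
    proof
      fix m
      show "infsum (\<lambda>i. tm (i, m - i)) {0..m} = d m"
        unfolding d_def T_def by (simp add: term_eq sum_distrib_left sQ_def mult_ac)
    qed
    ultimately show ?thesis by simp
  qed
  have dsums: "d sums (infsum d UNIV)" using has_sum_imp_sums[OF has_sum_infsum[OF dsum]] .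
  have "(\<Sum>m. C * d m) = C * infsum d UNIV"
    using sums_unique[OF sums_mult[OF dsums, of C]] by simp
  then have "(\<Sum>k\<le>n. wk k * phi32 r f g v w Q (u * Q ^ k)) = C * infsum tm UNIV"
    using LHS RHS1 by simp
  then show ?thesis unfolding wk_def C_def tm_def .
qed


theorem theorem4:
  fixes q :: real and n :: nat and x y r f g v w u :: complex
  assumes "0 < q" and "q < 1"
    and "y \<noteq> 0" and "x \<noteq> 0"
    and "\<And>m. qpoch v (complex_of_real q) m \<noteq> 0"
    and "\<And>m. qpoch w (complex_of_real q) m \<noteq> 0"
    and "qpoch y (complex_of_real q) n \<noteq> 0"
    and "\<And>m. qpoch (x * complex_of_real q / (y * complex_of_real q ^ n)) (complex_of_real q) m \<noteq> 0"
    and "norm u < 1"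
    and "norm (u * complex_of_real q / y) < 1"
  shows "(\<Sum>k\<le>n. qpoch (1 / complex_of_real q ^ n) (complex_of_real q) k
                   * qpoch x (complex_of_real q) k * complex_of_real q ^ k
                   / (qpoch (complex_of_real q) (complex_of_real q) k * qpoch y (complex_of_real q) k)
                   * phi32 r f g v w (complex_of_real q) (u * complex_of_real q ^ k))
       = x ^ n * qpoch (y / x) (complex_of_real q) n / qpoch y (complex_of_real q) n
         * infsum (\<lambda>(k, j). qpoch r (complex_of_real q) (k + j) * qpoch f (complex_of_real q) (k + j)
                     * qpoch g (complex_of_real q) (k + j)
                     / (qpoch (complex_of_real q) (complex_of_real q) j
                        * qpoch v (complex_of_real q) (k + j) * qpoch w (complex_of_real q) (k + j))
                     * (qpoch (complex_of_real q / (y * complex_of_real q ^ n)) (complex_of_real q) k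
                        * qpoch (complex_of_real q * x / y) (complex_of_real q) k)
                     / (qpoch (x * complex_of_real q / (y * complex_of_real q ^ n)) (complex_of_real q) k
                        * qpoch (complex_of_real q) (complex_of_real q) k)
                     * u ^ (k + j) * (complex_of_real q / y) ^ j)
                  (UNIV :: (nat \<times> nat) set)"
proof (rule main_Q)
  show "complex_of_real q \<noteq> 0" using assms(1) by simp
  show "norm (complex_of_real q) < 1" using assms(1,2) by simp
  show "qpoch (complex_of_real q) (complex_of_real q) m \<noteq> 0" for m
  proof
    assume "qpoch (complex_of_real q) (complex_of_real q) m = 0"
    then obtain j where "complex_of_real q * complex_of_real q ^ j = 1" by (auto simp: qp_zero_iff)
    then have "q ^ Suc j = 1" by (metis of_real_eq_1_iff of_real_mult of_real_power power_Suc)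
    moreover have "q ^ Suc j < 1" using assms(1,2) by (intro power_Suc_less_one) auto
    ultimately show False by simp
  qed
qed (use assms in auto)

end
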